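(* In the setting described in the context, let $\mathcal L_\tau(\theta)=\mathcal L(\theta)+\frac\tau2\|\theta\|_2^2$ with $\tau=c_\tau\min\{\kappa_1/\kappa_2,1/(\kappa_3\sqrt{d+1})\}\sqrt{\log n/(nL)}$ for a constant $c_\tau>0$. Then with probability at least $1-O(n^{-10})$, $$\|[\nabla\mathcal L_\tau(\theta^* )]_{1:n}\|_\infty\lesssim\sqrt{\frac{np\log n}{L}},\qquad\|[\nabla\mathcal L_\tau(\theta^* )]_{n+1:n+d}\|_2\lesssim\sqrt{\frac{(d+1)np\log n}{L}}.$$
   Context: Setting. Items $1,\dots,n$ have fixed covariates $x_1,\dots,x_n\in\mathbb R^d$, $d<n$, rescaled so $\|x_i\|_2\le\sqrt{(d+1)/n}$; $\tilde x_i=(e_i^\top,x_i^\top)^\top\in\mathbb R^{n+d}$, $e_i$ canonical in $\mathbb R^n$; $\theta=(\alpha^\top,\beta^\top)^\top$. True $\theta^*=(\alpha^{*\top},\beta^{*\top})^\top$. Erdős–Rényi comparison graph $\mathcal G=([n],\mathcal E)$, edge probability $p$; for each edge and $l\in[L]$, independent $y^{(l)}_{j,i}\in\{0,1\}$ with $P(y^{(l)}_{j,i}=1)=\phi(\tilde x_i^\top\theta^*-\tilde x_j^\top\theta^* )$, $\phi(t)=e^t/(1+e^t)$, $y^{(l)}_{i,j}=1-y^{(l)}_{j,i}$, $y_{j,i}=L^{-1}\sum_ly^{(l)}_{j,i}$. $\mathcal L(\theta)=\sum_{(i,j)\in\mathcal E,i>j}\{-y_{j,i}(\tilde x_i^\top\theta-\tilde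 x_j^\top\theta)+\log(1+e^{\tilde x_i^\top\theta-\tilde x_j^\top\theta})\}$. Assumption: $\Sigma=\sum_{j<i}(\tilde x_i-\tilde x_j)(\tilde x_i-\tilde x_j)^\top$ has $\|\Sigma\|\le c_1n$. Standing assumption: $pn>c_p\log n$ for a constant $c_p>0$, $n$ large. $\kappa_1=\exp(\max_{i,j}(\tilde x_i^\top\theta^*-\tilde x_j^\top\theta^* ))$, $\kappa_2=\max_i|\alpha_i^*|$, $\kappa_3=\|\theta^*\|_2/\sqrt n$. $a\lesssim b$: $a\le Cb$ with $C$ independent of $n,p,L,d,\kappa$'s. *)

theory Defs
  imports "HOL-Probability.Probability"
begin

text \<open>Items are indexed 0..n-1; covariates x i k (k < d); a parameter vector
theta :: nat => real is read on indices 0..n+d-1, with alpha_i = theta i (i<n)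
and beta_k = theta (n+k) (k<d).\<close>

definition logistic :: "real \<Rightarrow> real" where
  "logistic t = exp t / (1 + exp t)"

definition score :: "nat \<Rightarrow> nat \<Rightarrow> (nat \<Rightarrow> nat \<Rightarrow> real) \<Rightarrow> (nat \<Rightarrow> real) \<Rightarrow> nat \<Rightarrow> real" where
  "score n d x \<theta> i = \<theta> i + (\<Sum>k<d. x i k * \<theta> (n + k))"

definition pairs :: "nat \<Rightarrow> (nat \<times> nat) set" where
  "pairs n = {(i, j). j < i \<and> i < n}"

text \<open>Y (i,j,l) = True means y^(l)_{j,i} = 1; ybar gives y_{j,i}\<close>
definition ybar :: "nat \<Rightarrow> (nat \<times> nat \<times> nat \<Rightarrow> bool) \<Rightarrow> nat \<Rightarrow> nat \<Rightarrow> real" where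
  "ybar L Y i j = (\<Sum>l<L. if Y (i, j, l) then 1 else 0) / real L"

definition BTL_loss :: "nat \<Rightarrow> nat \<Rightarrow> (nat \<Rightarrow> nat \<Rightarrow> real) \<Rightarrow> nat \<Rightarrow>
    (nat \<times> nat \<Rightarrow> bool) \<Rightarrow> (nat \<times> nat \<times> nat \<Rightarrow> bool) \<Rightarrow> (nat \<Rightarrow> real) \<Rightarrow> real" where
  "BTL_loss n d x L E Y \<theta> =
     (\<Sum>(i, j)\<in>pairs n. if E (i, j) then
        - ybar L Y i j * (score n d x \<theta> i - score n d x \<theta> j)
        + ln (1 + exp (score n d x \<theta> i - score n d x \<theta> j))
      else 0)"

definition reg_loss :: "nat \<Rightarrow> nat \<Rightarrow> (nat \<Rightarrow> nat \<Rightarrow> real) \<Rightarrow> nat \<Rightarrow> real \<Rightarrow>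
    (nat \<times> nat \<Rightarrow> bool) \<Rightarrow> (nat \<times> nat \<times> nat \<Rightarrow> bool) \<Rightarrow> (nat \<Rightarrow> real) \<Rightarrow> real" where
  "reg_loss n d x L \<tau> E Y \<theta> = BTL_loss n d x L E Y \<theta> + \<tau> / 2 * (\<Sum>a<n+d. (\<theta> a)\<^sup>2)"

definition grad_comp :: "((nat \<Rightarrow> real) \<Rightarrow> real) \<Rightarrow> (nat \<Rightarrow> real) \<Rightarrow> nat \<Rightarrow> real" where
  "grad_comp F \<theta> a = deriv (\<lambda>t. F (\<theta>(a := t))) (\<theta> a)"

text \<open>Joint law of the Erdos-Renyi graph (edge indicators on pairs) and all
comparison outcomes (drawn for every pair, used only on edges).\<close>
definition sample_pmf :: "nat \<Rightarrow> nat \<Rightarrow> (nat \<Rightarrow> nat \<Rightarrow> real) \<Rightarrow> (nat \<Rightarrow> real) \<Rightarrow> real \<Rightarrow> nat \<Rightarrow>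
    ((nat \<times> nat \<Rightarrow> bool) \<times> (nat \<times> nat \<times> nat \<Rightarrow> bool)) pmf" where
  "sample_pmf n d x \<theta> p L =
     pair_pmf (Pi_pmf (pairs n) False (\<lambda>_. bernoulli_pmf p))
              (Pi_pmf {(i, j, l). (i, j) \<in> pairs n \<and> l < L} False
                 (\<lambda>(i, j, l). bernoulli_pmf (logistic (score n d x \<theta> i - score n d x \<theta> j))))"

definition kappa1 :: "nat \<Rightarrow> nat \<Rightarrow> (nat \<Rightarrow> nat \<Rightarrow> real) \<Rightarrow> (nat \<Rightarrow> real) \<Rightarrow> real" where
  "kappa1 n d x \<theta> = exp (Max {score n d x \<theta> i - score n d x \<theta> j | i j. i < n \<and> j < n})"

definition kappa2 :: "nat \<Rightarrow> (nat \<Rightarrow> real) \<Rightarrow> real" where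
  "kappa2 n \<theta> = Max {\<bar>\<theta> i\<bar> | i. i < n}"

definition kappa3 :: "nat \<Rightarrow> nat \<Rightarrow> (nat \<Rightarrow> real) \<Rightarrow> real" where
  "kappa3 n d \<theta> = sqrt (\<Sum>a<n+d. (\<theta> a)\<^sup>2) / sqrt (real n)"

text \<open>tau = c_tau * min(kappa1/kappa2, 1/(kappa3 sqrt(d+1))) * sqrt(log n/(nL)),
with a ratio whose denominator is 0 read as +infinity (dropped from the min);
if theta = 0 both are infinite, and tau is set to 0 (irrelevant: tau*theta = 0).\<close>
definition tau_val :: "real \<Rightarrow> nat \<Rightarrow> nat \<Rightarrow> (nat \<Rightarrow> nat \<Rightarrow> real) \<Rightarrow> (nat \<Rightarrow> real) \<Rightarrow> nat \<Rightarrow> real" where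
  "tau_val c n d x \<theta> L =
    (let k1 = kappa1 n d x \<theta>; k2 = kappa2 n \<theta>; k3 = kappa3 n d \<theta>;
         r2 = 1 / (k3 * sqrt (real d + 1));
         m = (if k2 = 0 \<and> k3 = 0 then 0
              else if k2 = 0 then r2
              else if k3 = 0 then k1 / k2
              else min (k1 / k2) r2)
     in c * m * sqrt (ln (real n) / (real n * real L)))"

end

theory Submission
  imports Defs
begin


lemma bern_hoeff:
  fixes q c :: real
  assumes q: "0 \<le> q" "q \<le> 1"
  shows "(\<integral>\<^sup>+b. ennreal (exp (c * (q - (if b then 1 else 0)))) \<partial>bernoulli_pmf q) \<le> ennreal (exp (c\<^sup>2 / 2))"
proof (cases "c = 0")
  case True
  then show ?thesis using q by (simp add: ennreal_plus[symmetric] del: ennreal_plus)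
next
  case False
  interpret interval_bounded_random_variable "measure_pmf (bernoulli_pmf q)" "\<lambda>b. sgn c * (q - (if b then 1 else 0))" "-1" "1"
  proof
    show "AE x in measure_pmf (bernoulli_pmf q). sgn c * (q - (if x then 1 else 0)) \<in> {- 1..1}"
      using q False by (intro AE_pmfI) (auto simp: sgn_if)
  qed simp
  have E0: "measure_pmf.expectation (bernoulli_pmf q) (\<lambda>b. sgn c * (q - (if b then 1 else 0))) = 0"
    using q by (simp add: algebra_simps)
  have "(\<integral>\<^sup>+b. ennreal (exp (\<bar>c\<bar> * (sgn c * (q - (if b then 1 else 0))))) \<partial>bernoulli_pmf q)
        \<le> ennreal (exp (\<bar>c\<bar>\<^sup>2 * (1 - - 1)\<^sup>2 / 8))"
    by (rule Hoeffdings_lemma_nn_integral_0) (use False E0 in auto)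
  moreover have "\<And>b. \<bar>c\<bar> * (sgn c * (q - (if b then 1 else 0))) = c * (q - (if b then 1 else 0))"
    by (simp add: abs_mult_sgn mult.assoc[symmetric])
  moreover have "\<bar>c\<bar>\<^sup>2 * (1 - - 1)\<^sup>2 / 8 = c\<^sup>2 / 2" by simp
  ultimately show ?thesis by simp
qed



definition indr :: "bool \<Rightarrow> real" where "indr b = (if b then 1 else 0)"

lemma sum_Q:
  fixes P :: "(nat \<times> nat) set" and f :: "nat \<times> nat \<times> nat \<Rightarrow> real"
  assumes "finite P"
  shows "(\<Sum>(i,j)\<in>P. \<Sum>l<L. f (i,j,l)) = (\<Sum>t\<in>{(i, j, l). (i, j) \<in> P \<and> l < L}. f t)"
proof -
  have Q: "{(i, j, l). (i, j) \<in> P \<and> l < L} = (\<lambda>((i,j),l). (i,j,l)) ` (P \<times> {..<L})"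
    by force
  have inj: "inj_on (\<lambda>((i,j),l). (i,j,l)) (P \<times> {..<L})"
    by (auto simp: inj_on_def)
  have "(\<Sum>t\<in>{(i, j, l). (i, j) \<in> P \<and> l < L}. f t) = (\<Sum>z\<in>P \<times> {..<L}. f ((\<lambda>((i,j),l). (i,j,l)) z))"
    unfolding Q by (rule sum.reindex[OF inj, unfolded comp_def])
  also have "\<dots> = (\<Sum>e\<in>P. \<Sum>l<L. f (fst e, snd e, l))"
    by (subst sum.cartesian_product) (auto intro!: sum.cong)
  also have "\<dots> = (\<Sum>(i,j)\<in>P. \<Sum>l<L. f (i,j,l))"
    by (simp add: case_prod_beta)
  finally show ?thesis by simp
qed

lemma noise_sum:
  fixes P :: "(nat \<times> nat) set"
  assumes "finite P" "L \<ge> 1"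
  shows "(\<Sum>(i,j)\<in>P. if E (i,j) then (q (i,j) - ybar L Y i j) * w (i,j) else 0)
       = (\<Sum>t\<in>{(i, j, l). (i, j) \<in> P \<and> l < L}. 
            (\<lambda>(i,j,l) b. if E (i,j) then (q (i,j) - indr b) * w (i,j) / L else 0) t (Y t))"
proof -
  have "(\<Sum>(i,j)\<in>P. if E (i,j) then (q (i,j) - ybar L Y i j) * w (i,j) else 0)
     = (\<Sum>(i,j)\<in>P. \<Sum>l<L. (\<lambda>(i,j,l) b. if E (i,j) then (q (i,j) - indr b) * w (i,j) / L else 0) (i,j,l) (Y (i,j,l)))"
  proof -
    have pt: "(if E (i,j) then (q (i,j) - ybar L Y i j) * w (i,j) else 0) =
      (\<Sum>l<L. (\<lambda>(i,j,l) b. if E (i,j) then (q (i,j) - indr b) * w (i,j) / L else 0) (i,j,l) (Y (i,j,l)))" for i j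
    proof (cases "E (i,j)")
      case True
      have "(\<Sum>l<L. (q (i,j) - indr (Y (i,j,l))) * w (i,j) / L)
           = ((\<Sum>l<L. q (i,j)) - (\<Sum>l<L. indr (Y (i,j,l)))) * w (i,j) / L"
        by (simp add: sum_subtractf sum_divide_distrib[symmetric] sum_distrib_right[symmetric])
      also have "\<dots> = (q (i,j) - ybar L Y i j) * w (i,j)"
        using assms(2) by (simp add: ybar_def indr_def field_simps)
      finally show ?thesis using True by simp
    qed simp
    show ?thesis by (intro sum.cong refl) (auto simp: pt)
  qed
  also have "\<dots> = (\<Sum>t\<in>{(i, j, l). (i, j) \<in> P \<and> l < L}. 
            (\<lambda>(i,j,l) b. if E (i,j) then (q (i,j) - indr b) * w (i,j) / L else 0) t (Y t))"
    by (rule sum_Q[OF assms(1), where f = "\<lambda>t. (\<lambda>(i,j,l) b. if E (i,j) then (q (i,j) - indr b) * w (i,j) / L else 0) t (Y t)"])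
  finally show ?thesis .
qed



lemma ennreal_exp_sum:
  assumes "finite A"
  shows "(\<Prod>t\<in>A. ennreal (exp (f t))) = ennreal (exp (\<Sum>t\<in>A. f t))"
  using assms by (simp add: prod_ennreal exp_sum)

lemma bern_E:
  fixes p u :: real
  assumes "0 \<le> p" "p \<le> 1" "0 \<le> u" "u \<le> 1"
  shows "(\<integral>\<^sup>+b. ennreal (exp (if b then u else 0)) \<partial>bernoulli_pmf p) \<le> ennreal (exp (2 * p * u))"
proof -
  have "(\<integral>\<^sup>+b. ennreal (exp (if b then u else 0)) \<partial>bernoulli_pmf p) = ennreal (exp u * p + (1 - p))"
    using assms by (simp add: ennreal_plus[symmetric] ennreal_mult[symmetric] del: ennreal_plus)
  also have "exp u * p + (1 - p) \<le> exp (2 * p * u)"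
  proof -
    have "exp u \<le> 1 + u + u\<^sup>2" using exp_bound assms by auto
    also have "\<dots> \<le> 1 + 2 * u" using assms by (simp add: power2_eq_square mult_left_le)
    finally have "exp u * p \<le> (1 + 2*u) * p" using assms by (simp add: mult_right_mono)
    hence "exp u * p + (1 - p) \<le> 1 + 2 * p * u" by (simp add: algebra_simps)
    also have "\<dots> \<le> exp (2 * p * u)" by (rule exp_ge_add_one_self)
    finally show ?thesis .
  qed
  hence "ennreal (exp u * p + (1 - p)) \<le> ennreal (exp (2 * p * u))" by (rule ennreal_leI)
  finally show ?thesis .
qed

lemma mgf_bound:
  fixes P :: "(nat \<times> nat) set" and q w :: "nat \<times> nat \<Rightarrow> real" and p lam :: real and L :: nat
  assumes fin: "finite P" and L: "L \<ge> 1" and p: "0 \<le> p" "p \<le> 1"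
    and q: "\<forall>e\<in>P. 0 \<le> q e \<and> q e \<le> 1" and lam: "lam \<ge> 0"
    and cw: "\<forall>e\<in>P. lam\<^sup>2 * (w e)\<^sup>2 \<le> L"
  shows "(\<integral>\<^sup>+z. ennreal (exp (lam * (\<Sum>(i,j)\<in>P. if fst z (i,j) then (q (i,j) - ybar L (snd z) i j) * w (i,j) else 0)))
           \<partial>pair_pmf (Pi_pmf P False (\<lambda>_. bernoulli_pmf p))
                     (Pi_pmf {(i,j,l). (i,j)\<in>P \<and> l<L} False (\<lambda>(i,j,l). bernoulli_pmf (q (i,j)))))
         \<le> ennreal (exp (p * lam\<^sup>2 * (\<Sum>e\<in>P. (w e)\<^sup>2) / L))"
proof -
  define Q where "Q = {(i,j,l). (i,j)\<in>P \<and> l<L}"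
  have finQ: "finite Q"
  proof -
    have "Q \<subseteq> (\<lambda>((i,j),l). (i,j,l)) ` (P \<times> {..<L})" unfolding Q_def by force
    thus ?thesis by (rule finite_subset) (use fin in auto)
  qed
  define h :: "(nat \<times> nat \<Rightarrow> bool) \<Rightarrow> nat \<times> nat \<times> nat \<Rightarrow> bool \<Rightarrow> real" where "h = (\<lambda>E. \<lambda>(i,j,l) b. if E (i,j) then (q (i,j) - indr b) * w (i,j) / L else (0::real))"
  define G where "G = (\<lambda>e b. ennreal (exp (if b then lam\<^sup>2 * (w e)\<^sup>2 / (2 * L) else 0)))"
  have inner: "(\<integral>\<^sup>+Y. ennreal (exp (lam * (\<Sum>(i,j)\<in>P. if E (i,j) then (q (i,j) - ybar L Y i j) * w (i,j) else 0)))
           \<partial>Pi_pmf Q False (\<lambda>(i,j,l). bernoulli_pmf (q (i,j)))) \<le> (\<Prod>e\<in>P. G e (E e))" for E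
  proof -
    have "(\<integral>\<^sup>+Y. ennreal (exp (lam * (\<Sum>(i,j)\<in>P. if E (i,j) then (q (i,j) - ybar L Y i j) * w (i,j) else 0)))
           \<partial>Pi_pmf Q False (\<lambda>(i,j,l). bernoulli_pmf (q (i,j))))
        = (\<integral>\<^sup>+Y. (\<Prod>t\<in>Q. (\<lambda>t b. ennreal (exp (lam * h E t b))) t (Y t))
           \<partial>Pi_pmf Q False (\<lambda>(i,j,l). bernoulli_pmf (q (i,j))))"
    proof (intro nn_integral_cong)
      fix Y
      have "(\<Sum>(i,j)\<in>P. if E (i,j) then (q (i,j) - ybar L Y i j) * w (i,j) else 0) = (\<Sum>t\<in>Q. h E t (Y t))"
        unfolding Q_def h_def by (rule noise_sum[OF fin L])
      thus "ennreal (exp (lam * (\<Sum>(i,j)\<in>P. if E (i,j) then (q (i,j) - ybar L Y i j) * w (i,j) else 0)))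
          = (\<Prod>t\<in>Q. (\<lambda>t b. ennreal (exp (lam * h E t b))) t (Y t))"
        by (simp add: ennreal_exp_sum[OF finQ] sum_distrib_left)
    qed
    also have "\<dots> = (\<Prod>t\<in>Q. \<integral>\<^sup>+b. ennreal (exp (lam * h E t b)) \<partial>((\<lambda>(i,j,l). bernoulli_pmf (q (i,j))) t))"
      by (rule nn_integral_prod_Pi_pmf[OF finQ])
    also have "\<dots> \<le> (\<Prod>t\<in>Q. ennreal (exp ((\<lambda>(i,j,l). if E (i,j) then (lam * w (i,j) / L)\<^sup>2 / 2 else 0) t)))"
    proof (intro prod_mono_ennreal)
      fix t assume t: "t \<in> Q"
      obtain i j l where tt: "t = (i,j,l)" by (cases t) auto
      have ij: "(i,j) \<in> P" using t tt unfolding Q_def by auto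
      show "(\<integral>\<^sup>+b. ennreal (exp (lam * h E t b)) \<partial>((\<lambda>(i,j,l). bernoulli_pmf (q (i,j))) t))
            \<le> ennreal (exp ((\<lambda>(i,j,l). if E (i,j) then (lam * w (i,j) / L)\<^sup>2 / 2 else 0) t))"
      proof (cases "E (i,j)")
        case True
        have "\<And>b. lam * h E t b = (lam * w (i,j) / L) * (q (i,j) - (if b then 1 else 0))"
          using True by (simp add: h_def tt indr_def)
        thus ?thesis using bern_hoeff[of "q (i,j)" "lam * w (i,j) / L"] q ij True tt by simp
      next
        case False
        have one: "\<And>b. ennreal (exp (lam * h E t b)) = 1"
          using False by (simp add: h_def tt)
        have "(\<integral>\<^sup>+b. ennreal (exp (lam * h E t b)) \<partial>((\<lambda>(i,j,l). bernoulli_pmf (q (i,j))) t)) = 1"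
          by (simp only: one) (simp add: measure_pmf.emeasure_space_1)
        thus ?thesis using False tt by simp
      qed
    qed
    also have "\<dots> = ennreal (exp (\<Sum>t\<in>Q. (\<lambda>(i,j,l). if E (i,j) then (lam * w (i,j) / L)\<^sup>2 / 2 else 0) t))"
      by (rule ennreal_exp_sum[OF finQ])
    also have "(\<Sum>t\<in>Q. (\<lambda>(i,j,l). if E (i,j) then (lam * w (i,j) / L)\<^sup>2 / 2 else 0) t)
             = (\<Sum>(i,j)\<in>P. \<Sum>l<L. (\<lambda>(i,j,l). if E (i,j) then (lam * w (i,j) / L)\<^sup>2 / 2 else 0) (i,j,l))"
      unfolding Q_def by (rule sum_Q[OF fin, symmetric])
    also have "\<dots> = (\<Sum>e\<in>P. if E e then lam\<^sup>2 * (w e)\<^sup>2 / (2 * L) else 0)"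
      using L by (intro sum.cong refl) (auto simp: power_divide power_mult_distrib power2_eq_square field_simps)
    also have "ennreal (exp \<dots>) = (\<Prod>e\<in>P. G e (E e))"
      unfolding G_def by (subst ennreal_exp_sum[OF fin, symmetric]) (auto intro!: prod.cong)
    finally show ?thesis .
  qed
  have "(\<integral>\<^sup>+z. ennreal (exp (lam * (\<Sum>(i,j)\<in>P. if fst z (i,j) then (q (i,j) - ybar L (snd z) i j) * w (i,j) else 0)))
           \<partial>pair_pmf (Pi_pmf P False (\<lambda>_. bernoulli_pmf p)) (Pi_pmf Q False (\<lambda>(i,j,l). bernoulli_pmf (q (i,j)))))
      = (\<integral>\<^sup>+E. \<integral>\<^sup>+Y. ennreal (exp (lam * (\<Sum>(i,j)\<in>P. if E (i,j) then (q (i,j) - ybar L Y i j) * w (i,j) else 0)))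
           \<partial>Pi_pmf Q False (\<lambda>(i,j,l). bernoulli_pmf (q (i,j))) \<partial>Pi_pmf P False (\<lambda>_. bernoulli_pmf p))"
    unfolding nn_integral_pair_pmf' fst_conv snd_conv by (rule refl)
  also have "\<dots> \<le> (\<integral>\<^sup>+E. (\<Prod>e\<in>P. G e (E e)) \<partial>Pi_pmf P False (\<lambda>_. bernoulli_pmf p))"
    by (intro nn_integral_mono inner)
  also have "\<dots> = (\<Prod>e\<in>P. \<integral>\<^sup>+b. G e b \<partial>bernoulli_pmf p)"
    by (rule nn_integral_prod_Pi_pmf[OF fin])
  also have "\<dots> \<le> (\<Prod>e\<in>P. ennreal (exp (2 * p * (lam\<^sup>2 * (w e)\<^sup>2 / (2 * L)))))"
  proof (intro prod_mono_ennreal)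
    fix e assume e: "e \<in> P"
    have "0 \<le> lam\<^sup>2 * (w e)\<^sup>2 / (2 * L)" by simp
    moreover have "lam\<^sup>2 * (w e)\<^sup>2 / (2 * L) \<le> 1" proof -
      have "lam\<^sup>2 * (w e)\<^sup>2 \<le> L" using cw e by auto
      thus ?thesis using L by (simp add: field_simps)
    qed
    ultimately show "(\<integral>\<^sup>+b. G e b \<partial>bernoulli_pmf p) \<le> ennreal (exp (2 * p * (lam\<^sup>2 * (w e)\<^sup>2 / (2 * L))))"
      unfolding G_def by (intro bern_E p)
  qed
  also have "\<dots> = ennreal (exp (\<Sum>e\<in>P. 2 * p * (lam\<^sup>2 * (w e)\<^sup>2 / (2 * L))))"
    by (rule ennreal_exp_sum[OF fin])
  also have "(\<Sum>e\<in>P. 2 * p * (lam\<^sup>2 * (w e)\<^sup>2 / (2 * L))) = p * lam\<^sup>2 * (\<Sum>e\<in>P. (w e)\<^sup>2) / L"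
    using L by (simp add: sum_distrib_left sum_divide_distrib field_simps)
  finally show ?thesis unfolding Q_def .
qed



definition noiseS :: "(nat \<times> nat) set \<Rightarrow> (nat \<times> nat \<Rightarrow> real) \<Rightarrow> nat \<Rightarrow> (nat \<times> nat \<Rightarrow> real)
     \<Rightarrow> (nat \<times> nat \<Rightarrow> bool) \<times> (nat \<times> nat \<times> nat \<Rightarrow> bool) \<Rightarrow> real" where
  "noiseS P q L w z = (\<Sum>(i,j)\<in>P. if fst z (i,j) then (q (i,j) - ybar L (snd z) i j) * w (i,j) else 0)"

definition Mpmf :: "(nat \<times> nat) set \<Rightarrow> real \<Rightarrow> nat \<Rightarrow> (nat \<times> nat \<Rightarrow> real) \<Rightarrow>
    ((nat \<times> nat \<Rightarrow> bool) \<times> (nat \<times> nat \<times> nat \<Rightarrow> bool)) pmf" where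
  "Mpmf P p L q = pair_pmf (Pi_pmf P False (\<lambda>_. bernoulli_pmf p))
                     (Pi_pmf {(i,j,l). (i,j)\<in>P \<and> l<L} False (\<lambda>(i,j,l). bernoulli_pmf (q (i,j))))"

lemma tail_bound:
  fixes P :: "(nat \<times> nat) set" and q w :: "nat \<times> nat \<Rightarrow> real" and p lam t :: real and L :: nat
  assumes fin: "finite P" and L: "L \<ge> 1" and p: "0 \<le> p" "p \<le> 1"
    and q: "\<forall>e\<in>P. 0 \<le> q e \<and> q e \<le> 1" and lam: "lam > 0"
    and cw: "\<forall>e\<in>P. lam\<^sup>2 * (w e)\<^sup>2 \<le> L"
  shows "measure_pmf.prob (Mpmf P p L q) {z. t \<le> noiseS P q L w z}
      \<le> exp (- lam * t + p * lam\<^sup>2 * (\<Sum>e\<in>P. (w e)\<^sup>2) / L)"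
proof -
  let ?M = "Mpmf P p L q"
  have "emeasure ?M {z\<in>UNIV. noiseS P q L w z \<ge> t} \<le>
        ennreal (exp (-lam * t)) * nn_integral ?M (\<lambda>z. ennreal (exp (lam * noiseS P q L w z)) * indicator UNIV z)"
    by (rule Chernoff_ineq_nn_integral_ge) (use lam in auto)
  also have "nn_integral ?M (\<lambda>z. ennreal (exp (lam * noiseS P q L w z)) * indicator UNIV z)
      = nn_integral ?M (\<lambda>z. ennreal (exp (lam * noiseS P q L w z)))" by simp
  also have "\<dots> \<le> ennreal (exp (p * lam\<^sup>2 * (\<Sum>e\<in>P. (w e)\<^sup>2) / L))"
    unfolding Mpmf_def noiseS_def by (rule mgf_bound[OF fin L p q _ cw]) (use lam in simp)
  finally have "emeasure ?M {z. t \<le> noiseS P q L w z}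
      \<le> ennreal (exp (-lam * t)) * ennreal (exp (p * lam\<^sup>2 * (\<Sum>e\<in>P. (w e)\<^sup>2) / L))"
    by (simp add: mult_left_mono)
  also have "\<dots> = ennreal (exp (-lam * t) * exp (p * lam\<^sup>2 * (\<Sum>e\<in>P. (w e)\<^sup>2) / L))"
    by (simp add: ennreal_mult)
  also have "exp (-lam * t) * exp (p * lam\<^sup>2 * (\<Sum>e\<in>P. (w e)\<^sup>2) / L) = exp (- lam * t + p * lam\<^sup>2 * (\<Sum>e\<in>P. (w e)\<^sup>2) / L)"
    by (rule exp_add[symmetric])
  finally show ?thesis
    by (simp add: measure_pmf.emeasure_eq_measure)
qed

lemma tail_clean:
  fixes P :: "(nat \<times> nat) set" and q w :: "nat \<times> nat \<Rightarrow> real" and p a0 g V :: real and L :: nat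
  assumes fin: "finite P" and L: "L \<ge> 1" and p: "0 < p" "p \<le> 1"
    and q: "\<forall>e\<in>P. 0 \<le> q e \<and> q e \<le> 1" and a0: "0 < a0" "a0 \<le> 1" and g: "g > 0"
    and V: "V > 0" "(\<Sum>e\<in>P. (w e)\<^sup>2) \<le> V"
    and cw: "\<forall>e\<in>P. a0\<^sup>2 * g * (w e)\<^sup>2 \<le> p * V"
  shows "measure_pmf.prob (Mpmf P p L q) {z. 13 / a0 * sqrt (p * V * g / L) \<le> noiseS P q L w z}
      \<le> exp (- 12 * g)"
proof -
  define lam where "lam = a0 * sqrt (L * g / (p * V))"
  have Lpos: "real L > 0" using L by simp
  have lam: "lam > 0" unfolding lam_def using a0 g p V Lpos by simp
  have lam2: "lam\<^sup>2 = a0\<^sup>2 * (L * g / (p * V))"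
    unfolding lam_def using g p V Lpos by (simp add: power_mult_distrib)
  have cw': "\<forall>e\<in>P. lam\<^sup>2 * (w e)\<^sup>2 \<le> L"
  proof
    fix e assume e: "e \<in> P"
    have "lam\<^sup>2 * (w e)\<^sup>2 = (a0\<^sup>2 * g * (w e)\<^sup>2) * L / (p * V)" unfolding lam2 by (simp add: field_simps)
    also have "\<dots> \<le> (p * V) * L / (p * V)"
      using cw e Lpos p V by (intro divide_right_mono mult_right_mono) auto
    also have "\<dots> = L" using p V by simp
    finally show "lam\<^sup>2 * (w e)\<^sup>2 \<le> L" .
  qed
  have "measure_pmf.prob (Mpmf P p L q) {z. 13 / a0 * sqrt (p * V * g / L) \<le> noiseS P q L w z}
     \<le> exp (- lam * (13 / a0 * sqrt (p * V * g / L)) + p * lam\<^sup>2 * (\<Sum>e\<in>P. (w e)\<^sup>2) / L)"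
    by (rule tail_bound[OF fin L _ p(2) q lam cw']) (use p in simp)
  also have "\<dots> \<le> exp (- 12 * g)"
  proof -
    have "lam * (13 / a0 * sqrt (p * V * g / L)) = 13 * (sqrt (L * g / (p * V)) * sqrt (p * V * g / L))"
      unfolding lam_def using a0 by simp
    also have "sqrt (L * g / (p * V)) * sqrt (p * V * g / L) = sqrt (L * g / (p * V) * (p * V * g / L))"
      by (rule real_sqrt_mult[symmetric])
    also have "L * g / (p * V) * (p * V * g / L) = g\<^sup>2"
      using p V Lpos by (simp add: field_simps power2_eq_square)
    finally have A: "lam * (13 / a0 * sqrt (p * V * g / L)) = 13 * g" using g by simp
    have "p * lam\<^sup>2 * (\<Sum>e\<in>P. (w e)\<^sup>2) / L = a0\<^sup>2 * g * ((\<Sum>e\<in>P. (w e)\<^sup>2) / V)"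
      unfolding lam2 using p V Lpos by (simp add: field_simps)
    also have "\<dots> \<le> 1 * g * 1"
    proof (intro mult_mono)
      show "a0\<^sup>2 \<le> 1" using a0 by (simp add: power_le_one)
      show "(\<Sum>e\<in>P. (w e)\<^sup>2) / V \<le> 1" using V by simp
    qed (use g V in \<open>auto intro!: divide_nonneg_pos sum_nonneg\<close>)
    finally have B: "p * lam\<^sup>2 * (\<Sum>e\<in>P. (w e)\<^sup>2) / L \<le> g" by simp
    show ?thesis using A B by simp
  qed
  finally show ?thesis .
qed



definition Ds :: "nat \<Rightarrow> nat \<Rightarrow> (nat \<Rightarrow> nat \<Rightarrow> real) \<Rightarrow> nat \<Rightarrow> nat \<Rightarrow> real" where
  "Ds n d x i a = (if i = a then 1 else 0) + (\<Sum>k<d. x i k * (if n + k = a then 1 else 0))"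

lemma finite_pairs: "finite (pairs n)"
proof -
  have "pairs n \<subseteq> {..<n} \<times> {..<n}" unfolding pairs_def by auto
  thus ?thesis by (rule finite_subset) auto
qed

lemma deriv_upd: "((\<lambda>t. (\<theta>(a := t)) b) has_real_derivative (if b = a then 1 else 0)) (at t0)"
  by (cases "b = a") (auto intro: derivative_eq_intros)

lemma deriv_score:
  "((\<lambda>t. score n d x (\<theta>(a := t)) i) has_real_derivative Ds n d x i a) (at t0)"
  unfolding score_def Ds_def
  by (intro DERIV_add deriv_upd DERIV_sum DERIV_cmult)

lemma deriv_term:
  fixes y :: real
  shows "((\<lambda>t. - y * (score n d x (\<theta>(a := t)) i - score n d x (\<theta>(a := t)) j)
        + ln (1 + exp (score n d x (\<theta>(a := t)) i - score n d x (\<theta>(a := t)) j)))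
     has_real_derivative
      (logistic (score n d x (\<theta>(a := t0)) i - score n d x (\<theta>(a := t0)) j) - y) * (Ds n d x i a - Ds n d x j a)) (at t0)"
proof -
  define u where "u = (\<lambda>t. score n d x (\<theta>(a := t)) i - score n d x (\<theta>(a := t)) j)"
  have du: "(u has_real_derivative (Ds n d x i a - Ds n d x j a)) (at t0)"
    unfolding u_def by (intro DERIV_diff deriv_score)
  have dl: "((\<lambda>t. ln (1 + exp (u t))) has_real_derivative
      (inverse (1 + exp (u t0)) * (exp (u t0) * (Ds n d x i a - Ds n d x j a)))) (at t0)"
  proof (rule DERIV_chain2[where f = ln])
    show "(ln has_real_derivative inverse (1 + exp (u t0))) (at (1 + exp (u t0)))"
      by (rule DERIV_ln) (simp add: add_pos_pos)
    show "((\<lambda>t. 1 + exp (u t)) has_real_derivative exp (u t0) * (Ds n d x i a - Ds n d x j a)) (at t0)"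
      using DERIV_add[OF DERIV_const[of 1] DERIV_chain2[OF DERIV_exp du]] by simp
  qed
  have "((\<lambda>t. - y * u t + ln (1 + exp (u t))) has_real_derivative
      (- y * (Ds n d x i a - Ds n d x j a) + inverse (1 + exp (u t0)) * (exp (u t0) * (Ds n d x i a - Ds n d x j a)))) (at t0)"
    by (intro DERIV_add DERIV_cmult du dl)
  moreover have "- y * (Ds n d x i a - Ds n d x j a) + inverse (1 + exp (u t0)) * (exp (u t0) * (Ds n d x i a - Ds n d x j a))
     = (logistic (u t0) - y) * (Ds n d x i a - Ds n d x j a)"
  proof -
    have "inverse (1 + exp (u t0)) * (exp (u t0) * (Ds n d x i a - Ds n d x j a))
        = logistic (u t0) * (Ds n d x i a - Ds n d x j a)"
      by (simp add: logistic_def divide_inverse mult.commute mult.left_commute)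
    thus ?thesis by (simp add: algebra_simps)
  qed
  ultimately show ?thesis unfolding u_def by simp
qed

lemma grad_formula:
  assumes "a < n + d"
  shows "grad_comp (reg_loss n d x L \<tau> E Y) \<theta> a =
    (\<Sum>(i,j)\<in>pairs n. if E (i,j) then (logistic (score n d x \<theta> i - score n d x \<theta> j) - ybar L Y i j)
        * (Ds n d x i a - Ds n d x j a) else 0) + \<tau> * \<theta> a"
proof -
  have D1: "((\<lambda>t. BTL_loss n d x L E Y (\<theta>(a := t))) has_real_derivative
     (\<Sum>(i,j)\<in>pairs n. if E (i,j) then (logistic (score n d x (\<theta>(a := t0)) i - score n d x (\<theta>(a := t0)) j) - ybar L Y i j)
        * (Ds n d x i a - Ds n d x j a) else 0)) (at t0)" for t0
    unfolding BTL_loss_def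
  proof (intro DERIV_sum)
    fix e assume "e \<in> pairs n"
    obtain i j where e: "e = (i,j)" by (cases e)
    show "((\<lambda>t. case e of (i, j) \<Rightarrow> if E (i, j) then - ybar L Y i j * (score n d x (\<theta>(a := t)) i - score n d x (\<theta>(a := t)) j)
         + ln (1 + exp (score n d x (\<theta>(a := t)) i - score n d x (\<theta>(a := t)) j)) else 0) has_real_derivative
      (case e of (i,j) \<Rightarrow> if E (i,j) then (logistic (score n d x (\<theta>(a := t0)) i - score n d x (\<theta>(a := t0)) j) - ybar L Y i j)
        * (Ds n d x i a - Ds n d x j a) else 0)) (at t0)"
    proof (cases "E (i,j)")
      case True
      thus ?thesis using deriv_term[of "ybar L Y i j" n d x \<theta> a i j t0] by (simp add: e)
    qed (simp add: e)
  qed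
  have D2: "((\<lambda>t. \<tau> / 2 * (\<Sum>b<n+d. ((\<theta>(a := t)) b)\<^sup>2)) has_real_derivative
      \<tau> / 2 * (\<Sum>b<n+d. 2 * (\<theta>(a := t0)) b * (if b = a then 1 else 0))) (at t0)" for t0
  proof (intro DERIV_cmult DERIV_sum)
    fix b
    show "((\<lambda>t. ((\<theta>(a := t)) b)\<^sup>2) has_real_derivative 2 * (\<theta>(a := t0)) b * (if b = a then 1 else 0)) (at t0)"
      using DERIV_mult[OF deriv_upd[of \<theta> a b t0] deriv_upd[of \<theta> a b t0]]
      by (cases "b = a") (auto simp: power2_eq_square)
  qed
  have "(\<Sum>b<n+d. 2 * (\<theta>(a := \<theta> a)) b * (if b = a then 1 else 0)) = 2 * \<theta> a"
    using assms by (simp add: if_distrib sum.delta cong: if_cong)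
  hence D: "((\<lambda>t. reg_loss n d x L \<tau> E Y (\<theta>(a := t))) has_real_derivative
     (\<Sum>(i,j)\<in>pairs n. if E (i,j) then (logistic (score n d x \<theta> i - score n d x \<theta> j) - ybar L Y i j)
        * (Ds n d x i a - Ds n d x j a) else 0) + \<tau> * \<theta> a) (at (\<theta> a))"
    using DERIV_add[OF D1[of "\<theta> a", unfolded fun_upd_triv] D2[of "\<theta> a", unfolded fun_upd_triv]] unfolding reg_loss_def by simp
  show ?thesis unfolding grad_comp_def by (rule DERIV_imp_deriv[OF D])
qed



definition qf :: "nat \<Rightarrow> nat \<Rightarrow> (nat \<Rightarrow> nat \<Rightarrow> real) \<Rightarrow> (nat \<Rightarrow> real) \<Rightarrow> nat \<times> nat \<Rightarrow> real" where
  "qf n d x \<theta> e = logistic (score n d x \<theta> (fst e) - score n d x \<theta> (snd e))"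

definition wa :: "nat \<Rightarrow> nat \<times> nat \<Rightarrow> real" where
  "wa a e = (if fst e = a then 1 else 0) - (if snd e = a then 1 else 0)"

definition wb :: "(nat \<Rightarrow> nat \<Rightarrow> real) \<Rightarrow> nat \<Rightarrow> nat \<times> nat \<Rightarrow> real" where
  "wb x k e = x (fst e) k - x (snd e) k"

lemma sample_eq: "sample_pmf n d x \<theta> p L = Mpmf (pairs n) p L (qf n d x \<theta>)"
  unfolding sample_pmf_def Mpmf_def qf_def by simp

lemma grad_alpha:
  assumes "a < n"
  shows "grad_comp (reg_loss n d x L \<tau> E Y) \<theta> a = noiseS (pairs n) (qf n d x \<theta>) L (wa a) (E, Y) + \<tau> * \<theta> a"
proof -
  have "grad_comp (reg_loss n d x L \<tau> E Y) \<theta> a =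
    (\<Sum>(i,j)\<in>pairs n. if E (i,j) then (logistic (score n d x \<theta> i - score n d x \<theta> j) - ybar L Y i j)
        * (Ds n d x i a - Ds n d x j a) else 0) + \<tau> * \<theta> a"
    by (rule grad_formula) (use assms in simp)
  also have "(\<Sum>(i,j)\<in>pairs n. if E (i,j) then (logistic (score n d x \<theta> i - score n d x \<theta> j) - ybar L Y i j)
        * (Ds n d x i a - Ds n d x j a) else 0) = noiseS (pairs n) (qf n d x \<theta>) L (wa a) (E, Y)"
    unfolding noiseS_def
  proof (intro sum.cong refl, clarify)
    fix i j assume "(i,j) \<in> pairs n"
    have "Ds n d x i a - Ds n d x j a = wa a (i,j)"
      using assms by (simp add: Ds_def wa_def)
    thus "(if E (i,j) then (logistic (score n d x \<theta> i - score n d x \<theta> j) - ybar L Y i j)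
        * (Ds n d x i a - Ds n d x j a) else 0) =
        (if fst (E, Y) (i, j) then (qf n d x \<theta> (i, j) - ybar L (snd (E, Y)) i j) * wa a (i, j) else 0)"
      by (simp add: qf_def)
  qed
  finally show ?thesis .
qed

lemma grad_beta:
  assumes "k < d"
  shows "grad_comp (reg_loss n d x L \<tau> E Y) \<theta> (n + k) = noiseS (pairs n) (qf n d x \<theta>) L (wb x k) (E, Y) + \<tau> * \<theta> (n + k)"
proof -
  have "grad_comp (reg_loss n d x L \<tau> E Y) \<theta> (n + k) =
    (\<Sum>(i,j)\<in>pairs n. if E (i,j) then (logistic (score n d x \<theta> i - score n d x \<theta> j) - ybar L Y i j)
        * (Ds n d x i (n + k) - Ds n d x j (n + k)) else 0) + \<tau> * \<theta> (n + k)"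
    by (rule grad_formula) (use assms in simp)
  also have "(\<Sum>(i,j)\<in>pairs n. if E (i,j) then (logistic (score n d x \<theta> i - score n d x \<theta> j) - ybar L Y i j)
        * (Ds n d x i (n + k) - Ds n d x j (n + k)) else 0) = noiseS (pairs n) (qf n d x \<theta>) L (wb x k) (E, Y)"
    unfolding noiseS_def
  proof (intro sum.cong refl, clarify)
    fix i j assume ij: "(i,j) \<in> pairs n"
    have Dsi: "Ds n d x i' (n + k) = x i' k" if "i' < n" for i'
    proof -
      have "(\<Sum>k'<d. x i' k' * (if n + k' = n + k then 1 else 0)) = (\<Sum>k'<d. if k' = k then x i' k else 0)"
        by (intro sum.cong refl) auto
      also have "\<dots> = x i' k" using assms by simp
      finally show ?thesis using that by (simp add: Ds_def)
    qed
    have "Ds n d x i (n + k) - Ds n d x j (n + k) = wb x k (i,j)"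
      using ij by (simp add: Dsi wb_def pairs_def)
    thus "(if E (i,j) then (logistic (score n d x \<theta> i - score n d x \<theta> j) - ybar L Y i j)
        * (Ds n d x i (n + k) - Ds n d x j (n + k)) else 0) =
        (if fst (E, Y) (i, j) then (qf n d x \<theta> (i, j) - ybar L (snd (E, Y)) i j) * wb x k (i, j) else 0)"
      by (simp add: qf_def)
  qed
  finally show ?thesis .
qed

lemma noiseS_neg: "noiseS P q L (\<lambda>e. - w e) z = - noiseS P q L w z"
  unfolding noiseS_def by (simp add: sum_negf[symmetric] case_prod_beta if_distrib cong: if_cong)



lemma tau_bound:
  fixes c :: real
  assumes n: "n > 0" and c: "c > 0" and L: "L \<ge> 1" and g: "ln (real n) \<ge> 0"
  shows "\<bar>tau_val c n d x \<theta> L\<bar> * sqrt (\<Sum>a<n+d. (\<theta> a)\<^sup>2) \<le> c * sqrt (ln (real n) / L)"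
proof (cases "sqrt (\<Sum>a<n+d. (\<theta> a)\<^sup>2) = 0")
  case True
  then show ?thesis using c g by simp
next
  case False
  define T where "T = sqrt (\<Sum>a<n+d. (\<theta> a)\<^sup>2)"
  have Tpos: "T > 0" using False unfolding T_def by (simp add: sum_nonneg order.not_eq_order_implies_strict)
  define k1 where "k1 = kappa1 n d x \<theta>"
  define k2 where "k2 = kappa2 n \<theta>"
  define k3 where "k3 = kappa3 n d \<theta>"
  define r2 where "r2 = 1 / (k3 * sqrt (real d + 1))"
  have k3: "k3 = T / sqrt n" unfolding k3_def kappa3_def T_def ..
  have k3pos: "k3 > 0" using Tpos n by (simp add: k3)
  have k1pos: "k1 > 0" unfolding k1_def kappa1_def by simp
  have k2nn: "k2 \<ge> 0"
  proof -
    have fin: "finite {\<bar>\<theta> i\<bar> | i. i < n}"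
    proof -
      have "{\<bar>\<theta> i\<bar> | i. i < n} = (\<lambda>i. \<bar>\<theta> i\<bar>) ` {..<n}" by auto
      thus ?thesis by simp
    qed
    have "\<bar>\<theta> 0\<bar> \<in> {\<bar>\<theta> i\<bar> | i. i < n}" using n by auto
    hence "\<bar>\<theta> 0\<bar> \<le> k2" unfolding k2_def kappa2_def using fin by (intro Max_ge)
    thus ?thesis by linarith
  qed
  have r2pos: "r2 > 0" unfolding r2_def using k3pos by simp
  define m where "m = (if k2 = 0 \<and> k3 = 0 then 0 else if k2 = 0 then r2 else if k3 = 0 then k1 / k2 else min (k1 / k2) r2)"
  have m: "0 \<le> m \<and> m \<le> r2"
    unfolding m_def using k3pos r2pos k1pos k2nn by auto
  have tau: "tau_val c n d x \<theta> L = c * m * sqrt (ln (real n) / (real n * real L))"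
    unfolding tau_val_def m_def r2_def k1_def k2_def k3_def Let_def ..
  have "\<bar>tau_val c n d x \<theta> L\<bar> * T = c * m * sqrt (ln (real n) / (real n * real L)) * T"
    unfolding tau using m c g by (simp add: abs_mult)
  also have "\<dots> \<le> c * r2 * sqrt (ln (real n) / (real n * real L)) * T"
    using m c Tpos g by (intro mult_right_mono mult_left_mono) auto
  also have "r2 * T = sqrt n / sqrt (real d + 1)"
    unfolding r2_def k3 using Tpos n by (simp add: field_simps)
  hence "c * r2 * sqrt (ln (real n) / (real n * real L)) * T = c * (sqrt (ln (real n) / (real n * real L)) * sqrt n) / sqrt (real d + 1)"
    by (simp add: field_simps)
  also have "sqrt (ln (real n) / (real n * real L)) * sqrt n = sqrt (ln (real n) / L)"
    using n by (simp add: real_sqrt_mult[symmetric] field_simps)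
  also have "c * sqrt (ln (real n) / L) / sqrt (real d + 1) \<le> c * sqrt (ln (real n) / L)"
  proof -
    have "1 \<le> sqrt (real d + 1)" by simp
    moreover have "0 \<le> c * sqrt (ln (real n) / L)" using c g by simp
    ultimately show ?thesis by (simp add: divide_le_eq mult_le_cancel_left1 mult_left_le)
  qed
  finally show ?thesis unfolding T_def .
qed



lemma pairs_sub: "pairs n \<subseteq> {..<n} \<times> {..<n}" unfolding pairs_def by auto

lemma card_pairs_le: "real (card (pairs n)) \<le> real n * real n"
proof -
  have "card (pairs n) \<le> card ({..<n} \<times> {..<n})" by (rule card_mono[OF _ pairs_sub]) auto
  thus ?thesis by (simp add: card_cartesian_product flip: of_nat_mult)
qed

lemma sum_wa: assumes "a < n" shows "(\<Sum>e\<in>pairs n. (wa a e)\<^sup>2) \<le> 2 * real n"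
proof -
  have "(\<Sum>e\<in>pairs n. (wa a e)\<^sup>2) \<le> (\<Sum>e\<in>pairs n. (if fst e = a then 1 else 0) + (if snd e = a then 1 else (0::real)))"
    by (intro sum_mono) (auto simp: wa_def)
  also have "\<dots> \<le> (\<Sum>e\<in>{..<n} \<times> {..<n}. (if fst e = a then 1 else 0) + (if snd e = a then 1 else (0::real)))"
    by (intro sum_mono2 pairs_sub) auto
  also have "\<dots> = (\<Sum>i<n. \<Sum>j<n. (if i = a then 1 else 0) + (if j = a then 1 else (0::real)))"
    by (simp add: sum.cartesian_product case_prod_beta)
  also have "\<dots> = (\<Sum>i<n. (if i = a then real n else 0)) + (\<Sum>j<n. (if j = a then real n else 0))"
  proof -
    have "(\<Sum>i<n. \<Sum>j<n. (if i = a then 1 else 0) + (if j = a then 1 else (0::real)))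
       = (\<Sum>i<n. \<Sum>j<n. (if i = a then 1 else (0::real))) + (\<Sum>i<n. \<Sum>j<n. (if j = a then 1 else (0::real)))"
      by (simp add: sum.distrib)
    also have "(\<Sum>i<n. \<Sum>j<n. (if i = a then 1 else (0::real))) = (\<Sum>i<n. (if i = a then real n else 0))"
      by (intro sum.cong) auto
    also have "(\<Sum>i<n. \<Sum>j<n. (if j = a then 1 else (0::real))) = (\<Sum>j<n. (if j = a then real n else 0))"
      by (subst sum.swap) (intro sum.cong, auto)
    finally show ?thesis .
  qed
  also have "\<dots> = 2 * real n"
    using assms by simp
  finally show ?thesis .
qed

lemma row_bound:
  assumes "\<forall>i<n. sqrt (\<Sum>k<d. (x i k)\<^sup>2) \<le> sqrt ((real d + 1) / real n)" "i < n"
  shows "(\<Sum>k<d. (x i k)\<^sup>2) \<le> (real d + 1) / real n"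
  using assms by simp

lemma sqdiff: "((a::real) - b)\<^sup>2 \<le> 2 * a\<^sup>2 + 2 * b\<^sup>2"
proof -
  have "(a - b)\<^sup>2 = 2 * a\<^sup>2 + 2 * b\<^sup>2 - (a + b)\<^sup>2" by (simp add: power2_eq_square algebra_simps)
  thus ?thesis using zero_le_power2[of "a + b"] by linarith
qed

lemma four_split: "4 * (real d + 1) / real n = 2 * ((real d + 1) / real n) + 2 * ((real d + 1) / real n)"
  by (simp add: field_simps)

lemma wb_sq:
  assumes rb: "\<forall>i<n. sqrt (\<Sum>k<d. (x i k)\<^sup>2) \<le> sqrt ((real d + 1) / real n)" and k: "k < d" and e: "e \<in> pairs n"
  shows "(wb x k e)\<^sup>2 \<le> 4 * (real d + 1) / real n"
proof -
  obtain i j where ij: "e = (i,j)" "i < n" "j < n" using e unfolding pairs_def by auto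
  have xi: "(x i' k)\<^sup>2 \<le> (real d + 1) / real n" if "i' < n" for i'
  proof -
    have "(x i' k)\<^sup>2 \<le> (\<Sum>k<d. (x i' k)\<^sup>2)"
      using k by (intro member_le_sum) auto
    also have "\<dots> \<le> (real d + 1) / real n" by (rule row_bound[OF rb that])
    finally show ?thesis .
  qed
  have "(wb x k e)\<^sup>2 \<le> 2 * (x i k)\<^sup>2 + 2 * (x j k)\<^sup>2"
    unfolding wb_def ij fst_conv snd_conv by (rule sqdiff)
  also have "\<dots> \<le> 4 * (real d + 1) / real n" using xi[OF ij(2)] xi[OF ij(3)] four_split by linarith
  finally show ?thesis .
qed

lemma sum_Wb:
  assumes rb: "\<forall>i<n. sqrt (\<Sum>k<d. (x i k)\<^sup>2) \<le> sqrt ((real d + 1) / real n)" and n: "n > 0"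
  shows "(\<Sum>k<d. \<Sum>e\<in>pairs n. (wb x k e)\<^sup>2) \<le> 4 * real n * (real d + 1)"
proof -
  have "(\<Sum>k<d. \<Sum>e\<in>pairs n. (wb x k e)\<^sup>2) = (\<Sum>e\<in>pairs n. \<Sum>k<d. (wb x k e)\<^sup>2)"
    by (rule sum.swap)
  also have "\<dots> \<le> (\<Sum>e\<in>pairs n. 4 * (real d + 1) / real n)"
  proof (intro sum_mono)
    fix e assume e: "e \<in> pairs n"
    obtain i j where ij: "e = (i,j)" "i < n" "j < n" using e unfolding pairs_def by auto
    have "(\<Sum>k<d. (wb x k e)\<^sup>2) \<le> (\<Sum>k<d. 2 * (x i k)\<^sup>2 + 2 * (x j k)\<^sup>2)"
    proof (intro sum_mono)
      fix k
      show "(wb x k e)\<^sup>2 \<le> 2 * (x i k)\<^sup>2 + 2 * (x j k)\<^sup>2"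
        unfolding wb_def ij fst_conv snd_conv by (rule sqdiff)
    qed
    also have "\<dots> = 2 * (\<Sum>k<d. (x i k)\<^sup>2) + 2 * (\<Sum>k<d. (x j k)\<^sup>2)"
      by (simp add: sum.distrib sum_distrib_left)
    also have "\<dots> \<le> 4 * (real d + 1) / real n"
      using row_bound[OF rb ij(2)] row_bound[OF rb ij(3)] four_split by linarith
    finally show "(\<Sum>k<d. (wb x k e)\<^sup>2) \<le> 4 * (real d + 1) / real n" .
  qed
  also have "\<dots> = real (card (pairs n)) * (4 * (real d + 1) / real n)" by simp
  also have "\<dots> \<le> (real n * real n) * (4 * (real d + 1) / real n)"
    by (intro mult_right_mono card_pairs_le) auto
  also have "\<dots> = 4 * real n * (real d + 1)" using n by (simp add: field_simps)
  finally show ?thesis .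
qed



lemma logistic_01: "0 \<le> logistic t \<and> logistic t \<le> 1"
  unfolding logistic_def by (simp add: add_pos_pos less_imp_le)

lemma sq_le_of_abs: "\<bar>s::real\<bar> \<le> t \<Longrightarrow> s\<^sup>2 \<le> t\<^sup>2"
  using power_mono[of "\<bar>s\<bar>" t 2] by simp

theorem lemma20:
  fixes c_p c_1 c_tau :: real
  assumes "c_p > 0" and "c_1 > 0" and "c_tau > 0"
  shows "\<exists>C C' :: real. \<exists>N0 :: nat. C > 0 \<and> C' > 0 \<and>
    (\<forall>(n::nat) (d::nat) (p::real) (L::nat) (x :: nat \<Rightarrow> nat \<Rightarrow> real) (\<theta>s :: nat \<Rightarrow> real).
      n \<ge> N0 \<longrightarrow> d < n \<longrightarrow> L \<ge> 1 \<longrightarrow> 0 \<le> p \<longrightarrow> p \<le> 1 \<longrightarrow>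
      p * real n > c_p * ln (real n) \<longrightarrow>
      (\<forall>i<n. sqrt (\<Sum>k<d. (x i k)\<^sup>2) \<le> sqrt ((real d + 1) / real n)) \<longrightarrow>
      (\<forall>v :: nat \<Rightarrow> real.
         sqrt (\<Sum>a<n+d. (\<Sum>(i, j)\<in>pairs n.
                 (\<lambda>b. (if b < n then (if b = i then 1 else 0) - (if b = j then 1 else 0)
                        else x i (b - n) - x j (b - n))) a *
                 (\<Sum>b<n+d. (if b < n then (if b = i then 1 else 0) - (if b = j then 1 else 0)
                        else x i (b - n) - x j (b - n)) * v b))\<^sup>2)
         \<le> c_1 * real n * sqrt (\<Sum>a<n+d. (v a)\<^sup>2)) \<longrightarrow>
      measure_pmf.prob (sample_pmf n d x \<theta>s p L)
        {(E, Y). let g = grad_comp (reg_loss n d x L (tau_val c_tau n d x \<theta>s L) E Y) \<theta>s in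
           (\<forall>i<n. \<bar>g i\<bar> \<le> C * sqrt (real n * p * ln (real n) / real L)) \<and>
           sqrt (\<Sum>k<d. (g (n + k))\<^sup>2) \<le> C * sqrt ((real d + 1) * real n * p * ln (real n) / real L)}
        \<ge> 1 - C' / (real n) ^ 10)"
proof -
  have cp: "c_p > 0" and ct: "c_tau > 0" using assms by auto
  define a0 where "a0 = min 1 (sqrt c_p / 2)"
  have a0: "0 < a0" "a0 \<le> 1" using cp unfolding a0_def by auto
  have a0sq: "a0\<^sup>2 \<le> c_p / 4"
  proof -
    have "a0\<^sup>2 \<le> (sqrt c_p / 2)\<^sup>2" using a0 unfolding a0_def by (intro power_mono) auto
    also have "\<dots> = c_p / 4" using cp by (simp add: power_divide)
    finally show ?thesis .
  qed
  define C0 where "C0 = 13 / a0"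
  have C0: "C0 > 0" unfolding C0_def using a0 by simp
  define C where "C = 3 * C0 + c_tau"
  define N0 :: nat where "N0 = max 3 (nat \<lceil>exp (1 / c_p)\<rceil>)"
  show ?thesis
  proof (rule exI[of _ C], rule exI[of _ "4::real"], rule exI[of _ N0], intro conjI allI impI)
    show "C > 0" unfolding C_def using C0 ct by simp
    show "(4::real) > 0" by simp
    fix n d :: nat and p :: real and L :: nat and x :: "nat \<Rightarrow> nat \<Rightarrow> real" and \<theta>s :: "nat \<Rightarrow> real"
    assume nN0: "N0 \<le> n" and dn: "d < n" and L: "1 \<le> L" and p0: "0 \<le> p" and p1: "p \<le> 1"
      and pn: "c_p * ln (real n) < p * real n"
      and rb: "\<forall>i<n. sqrt (\<Sum>k<d. (x i k)\<^sup>2) \<le> sqrt ((real d + 1) / real n)"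
    have n3: "n \<ge> 3" using nN0 unfolding N0_def by simp
    have npos: "n > 0" using n3 by simp
    define g where "g = ln (real n)"
    have gpos: "g > 0" unfolding g_def using n3 by simp
    have cg: "c_p * g \<ge> 1"
    proof -
      have "nat \<lceil>exp (1 / c_p)\<rceil> \<le> n" using nN0 unfolding N0_def by simp
      hence "real (nat \<lceil>exp (1 / c_p)\<rceil>) \<le> real n" by linarith
      hence "exp (1 / c_p) \<le> real n" using real_nat_ceiling_ge[of "exp (1 / c_p)"] by linarith
      hence "ln (exp (1 / c_p)) \<le> g" unfolding g_def using npos by (subst ln_le_cancel_iff) auto
      hence "1 / c_p \<le> g" by simp
      thus ?thesis using cp by (simp add: field_simps)
    qed
    have pn': "c_p * g < p * real n" using pn unfolding g_def .
    have np1: "p * real n \<ge> 1" using cg pn' by linarith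
    have ppos: "p > 0" using np1 p0 by (cases "p = 0") auto
    define P where "P = pairs n"
    define q where "q = qf n d x \<theta>s"
    define M where "M = Mpmf P p L q"
    have finP: "finite P" unfolding P_def by (rule finite_pairs)
    have q01: "\<forall>e\<in>P. 0 \<le> q e \<and> q e \<le> 1" unfolding q_def qf_def using logistic_01 by blast
    define S where "S = (\<lambda>w z. noiseS P q L w z)"
    define \<epsilon> where "\<epsilon> = exp (- 12 * g)"
    define ta where "ta = 13 / a0 * sqrt (p * (2 * real n) * g / L)"
    define V where "V = (\<lambda>k. (\<Sum>e\<in>P. (wb x k e)\<^sup>2) + (real d + 1))"
    define tb where "tb = (\<lambda>k. 13 / a0 * sqrt (p * V k * g / L))"
    have a0g: "a0\<^sup>2 * g \<le> p * real n / 4"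
    proof -
      have "a0\<^sup>2 * g \<le> c_p / 4 * g" using a0sq gpos by (intro mult_right_mono) auto
      thus ?thesis using pn' by simp
    qed
    have tail_a: "measure_pmf.prob M {z. ta \<le> S w z} \<le> \<epsilon>"
      if a: "a < n" and w: "w = wa a \<or> w = (\<lambda>e. - wa a e)" for a w
    proof -
      have wsq: "(w e)\<^sup>2 = (wa a e)\<^sup>2" for e using w by auto
      have wle1: "(w e)\<^sup>2 \<le> 1" for e unfolding wsq wa_def by auto
      show ?thesis unfolding M_def S_def ta_def \<epsilon>_def
      proof (rule tail_clean[OF finP L ppos p1 q01 a0 gpos])
        show "0 < 2 * real n" using npos by simp
        show "(\<Sum>e\<in>P. (w e)\<^sup>2) \<le> 2 * real n" unfolding wsq P_def by (rule sum_wa[OF a])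
        show "\<forall>e\<in>P. a0\<^sup>2 * g * (w e)\<^sup>2 \<le> p * (2 * real n)"
        proof
          fix e
          have "a0\<^sup>2 * g * (w e)\<^sup>2 \<le> a0\<^sup>2 * g * 1"
            using wle1[of e] gpos by (intro mult_left_mono) auto
          also have "\<dots> \<le> p * (2 * real n)"
          proof -
            have "p * (2 * real n) = 2 * (p * real n)" by simp
            moreover have "0 \<le> p * real n" using ppos by simp
            ultimately show ?thesis using a0g by linarith
          qed
          finally show "a0\<^sup>2 * g * (w e)\<^sup>2 \<le> p * (2 * real n)" .
        qed
      qed
    qed
    have tail_b: "measure_pmf.prob M {z. tb k \<le> S w z} \<le> \<epsilon>"
      if k: "k < d" and w: "w = wb x k \<or> w = (\<lambda>e. - wb x k e)" for k w
    proof -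
      have wsq: "(w e)\<^sup>2 = (wb x k e)\<^sup>2" for e using w by auto
      show ?thesis unfolding M_def S_def tb_def \<epsilon>_def
      proof (rule tail_clean[OF finP L ppos p1 q01 a0 gpos])
        show "0 < V k" unfolding V_def by (simp add: add_nonneg_pos sum_nonneg)
        show "(\<Sum>e\<in>P. (w e)\<^sup>2) \<le> V k" unfolding wsq V_def by simp
        show "\<forall>e\<in>P. a0\<^sup>2 * g * (w e)\<^sup>2 \<le> p * V k"
        proof
          fix e assume e: "e \<in> P"
          have "a0\<^sup>2 * g * (w e)\<^sup>2 \<le> a0\<^sup>2 * g * (4 * (real d + 1) / real n)"
            unfolding wsq using wb_sq[OF rb k e[unfolded P_def]] gpos by (intro mult_left_mono) auto
          also have "\<dots> \<le> (p * real n / 4) * (4 * (real d + 1) / real n)"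
            using a0g by (intro mult_right_mono) auto
          also have "\<dots> = p * (real d + 1)" using npos by (simp add: field_simps)
          also have "\<dots> \<le> p * V k" unfolding V_def using ppos by (intro mult_left_mono) (auto simp: sum_nonneg)
          finally show "a0\<^sup>2 * g * (w e)\<^sup>2 \<le> p * V k" .
        qed
      qed
    qed
    define I :: "(nat \<times> nat) set" where "I = ({0,1} \<times> {..<n}) \<union> ({2,3} \<times> {..<d})"
    define Bd where "Bd = (\<lambda>(c::nat, a). if c = 0 then {z. ta \<le> S (wa a) z}
        else if c = 1 then {z. ta \<le> S (\<lambda>e. - wa a e) z}
        else if c = 2 then {z. tb a \<le> S (wb x a) z} else {z. tb a \<le> S (\<lambda>e. - wb x a e) z})"
    have finI: "finite I" unfolding I_def by simp
    have cardI: "real (card I) \<le> 4 * real n"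
    proof -
      have "card I \<le> card ({0::nat,1} \<times> {..<n}) + card ({2::nat,3} \<times> {..<d})"
        unfolding I_def by (rule card_Un_le)
      also have "\<dots> = 2 * n + 2 * d" by (simp add: card_cartesian_product)
      finally have "card I \<le> 2 * n + 2 * d" .
      hence "real (card I) \<le> 2 * real n + 2 * real d" by linarith
      thus ?thesis using dn by linarith
    qed
    have Bd_le: "measure_pmf.prob M (Bd i) \<le> \<epsilon>" if i: "i \<in> I" for i
    proof -
      obtain c a where ca: "i = (c, a)" by (cases i)
      show ?thesis
      proof (cases "c = 0 \<or> c = 1")
        case True
        hence a: "a < n" using i ca unfolding I_def by auto
        show ?thesis using True tail_a[OF a, of "wa a"] tail_a[OF a, of "\<lambda>e. - wa a e"]
          unfolding ca Bd_def by auto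
      next
        case False
        hence a: "a < d" "c = 2 \<or> c = 3" using i ca unfolding I_def by auto
        show ?thesis using False a tail_b[OF a(1), of "wb x a"] tail_b[OF a(1), of "\<lambda>e. - wb x a e"]
          unfolding ca Bd_def by auto
      qed
    qed
    have probBad: "measure_pmf.prob M (\<Union>i\<in>I. Bd i) \<le> 4 / real n ^ 10"
    proof -
      have "measure_pmf.prob M (\<Union>i\<in>I. Bd i) \<le> (\<Sum>i\<in>I. measure_pmf.prob M (Bd i))"
        by (rule measure_pmf.finite_measure_subadditive_finite[OF finI]) auto
      also have "\<dots> \<le> (\<Sum>i\<in>I. \<epsilon>)" by (intro sum_mono Bd_le)
      also have "\<dots> = real (card I) * \<epsilon>" by simp
      also have "\<dots> \<le> 4 * real n * \<epsilon>" using cardI unfolding \<epsilon>_def by (intro mult_right_mono) auto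
      also have "\<epsilon> = 1 / real n ^ 12"
      proof -
        have "exp (12 * g) = exp g ^ 12" using exp_of_nat_mult[of 12 g] by simp
        also have "exp g = real n" unfolding g_def using npos by simp
        finally have "exp (12 * g) = real n ^ 12" .
        thus ?thesis unfolding \<epsilon>_def by (simp add: exp_minus field_simps)
      qed
      also have "4 * real n * (1 / real n ^ 12) \<le> 4 / real n ^ 10"
      proof -
        have "4 * real n * (1 / real n ^ 12) = 4 / real n ^ 11" using npos by (simp add: field_simps eval_nat_numeral)
        also have "\<dots> \<le> 4 / real n ^ 10"
          using npos by (intro divide_left_mono) (auto simp: power_increasing)
        finally show ?thesis .
      qed
      finally show ?thesis .
    qed
    define \<tau> where "\<tau> = tau_val c_tau n d x \<theta>s L"
    define T where "T = sqrt (\<Sum>a<n+d. (\<theta>s a)\<^sup>2)"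
    have tauT: "\<bar>\<tau>\<bar> * T \<le> c_tau * sqrt (g / L)"
      unfolding \<tau>_def T_def g_def by (rule tau_bound[OF npos ct L]) (use gpos g_def in simp)
    define s1 where "s1 = sqrt (real n * p * ln (real n) / real L)"
    define s2 where "s2 = sqrt ((real d + 1) * real n * p * ln (real n) / real L)"
    have gs1: "sqrt (g / L) \<le> s1"
      unfolding s1_def g_def[symmetric]
    proof (rule real_sqrt_le_mono)
      have "g * 1 \<le> g * (real n * p)" using np1 gpos by (intro mult_left_mono) (auto simp: mult.commute)
      thus "g / real L \<le> real n * p * g / real L" by (intro divide_right_mono) (auto simp: mult_ac)
    qed
    have gs2: "sqrt (g / L) \<le> s2"
      unfolding s2_def g_def[symmetric]
    proof (rule real_sqrt_le_mono)
      have "g * 1 \<le> g * ((real d + 1) * (real n * p))"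
      proof (intro mult_left_mono)
        have "1 * 1 \<le> (real d + 1) * (real n * p)" using np1 by (intro mult_mono) (auto simp: mult.commute)
        thus "1 \<le> (real d + 1) * (real n * p)" by simp
      qed (use gpos in auto)
      thus "g / real L \<le> (real d + 1) * real n * p * g / real L" by (intro divide_right_mono) (auto simp: mult_ac)
    qed
    have ctg1: "c_tau * sqrt (g / L) \<le> c_tau * s1" using gs1 ct by (intro mult_left_mono) auto
    have ctg2: "c_tau * sqrt (g / L) \<le> c_tau * s2" using gs2 ct by (intro mult_left_mono) auto
    have s1nn: "s1 \<ge> 0" unfolding s1_def using ppos gpos unfolding g_def by simp
    have s2nn: "s2 \<ge> 0" unfolding s2_def using ppos gpos unfolding g_def by simp
    have ta_le: "ta \<le> 2 * C0 * s1"
    proof -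
      have "p * (2 * real n) * g / real L = 2 * (real n * p * ln (real n) / real L)"
        unfolding g_def by (simp add: field_simps)
      hence "ta = C0 * sqrt (2 * (real n * p * ln (real n) / real L))" unfolding ta_def C0_def by simp
      hence "ta = C0 * (sqrt 2 * s1)" unfolding s1_def by (simp only: real_sqrt_mult)
      moreover have "sqrt 2 \<le> 2"
      proof -
        have "sqrt 2 \<le> sqrt (2\<^sup>2)" by (rule real_sqrt_le_mono) simp
        thus ?thesis by simp
      qed
      hence "C0 * (sqrt 2 * s1) \<le> C0 * (2 * s1)" using C0 s1nn
        by (intro mult_left_mono mult_right_mono) auto
      ultimately show ?thesis by simp
    qed
    have sumtb: "sqrt (\<Sum>k<d. (tb k)\<^sup>2) \<le> 3 * C0 * s2"
    proof -
      have Vnn: "V k \<ge> 0" for k unfolding V_def by (simp add: sum_nonneg add_nonneg_nonneg)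
      have tbsq: "(tb k)\<^sup>2 = C0\<^sup>2 * (p * g / L) * V k" for k
      proof -
        have nn: "0 \<le> p * V k * g / real L" using ppos gpos Vnn[of k] by simp
        have "(tb k)\<^sup>2 = C0\<^sup>2 * (sqrt (p * V k * g / L))\<^sup>2" unfolding tb_def C0_def[symmetric]
          by (simp only: power_mult_distrib)
        also have "(sqrt (p * V k * g / L))\<^sup>2 = p * V k * g / L" using nn by simp
        finally show ?thesis by (simp add: field_simps)
      qed
      have "(\<Sum>k<d. (tb k)\<^sup>2) = C0\<^sup>2 * (p * g / L) * (\<Sum>k<d. V k)"
        by (simp add: tbsq sum_distrib_left)
      also have "(\<Sum>k<d. V k) \<le> 5 * real n * (real d + 1)"
      proof -
        have "(\<Sum>k<d. V k) = (\<Sum>k<d. \<Sum>e\<in>P. (wb x k e)\<^sup>2) + real d * (real d + 1)"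
          unfolding V_def by (simp add: sum.distrib)
        also have "\<dots> \<le> 4 * real n * (real d + 1) + real n * (real d + 1)"
          using sum_Wb[OF rb npos] dn unfolding P_def by (intro add_mono mult_right_mono) auto
        finally show ?thesis by simp
      qed
      hence "C0\<^sup>2 * (p * g / L) * (\<Sum>k<d. V k) \<le> C0\<^sup>2 * (p * g / L) * (5 * real n * (real d + 1))"
        using ppos gpos by (intro mult_left_mono) auto
      also have "\<dots> = (C0 * sqrt 5 * s2)\<^sup>2"
      proof -
        have nn: "0 \<le> (real d + 1) * real n * p * ln (real n) / real L" using ppos gpos unfolding g_def by simp
        have "(C0 * sqrt 5 * s2)\<^sup>2 = C0\<^sup>2 * 5 * ((real d + 1) * real n * p * ln (real n) / real L)"
          unfolding s2_def using nn by (simp add: power_mult_distrib)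
        thus ?thesis unfolding g_def by (simp add: field_simps)
      qed
      finally have "sqrt (\<Sum>k<d. (tb k)\<^sup>2) \<le> sqrt ((C0 * sqrt 5 * s2)\<^sup>2)"
        by (rule real_sqrt_le_mono)
      also have "\<dots> = C0 * sqrt 5 * s2" using C0 s2nn by simp
      also have "sqrt 5 \<le> 3"
      proof -
        have "sqrt 5 \<le> sqrt (3\<^sup>2)" by (rule real_sqrt_le_mono) simp
        thus ?thesis by simp
      qed
      hence "C0 * sqrt 5 * s2 \<le> 3 * C0 * s2" using C0 s2nn by (simp add: mult_right_mono)
      finally show ?thesis .
    qed
    have good: "z \<in> {(E, Y). let g = grad_comp (reg_loss n d x L (tau_val c_tau n d x \<theta>s L) E Y) \<theta>s in
           (\<forall>i<n. \<bar>g i\<bar> \<le> C * sqrt (real n * p * ln (real n) / real L)) \<and>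
           sqrt (\<Sum>k<d. (g (n + k))\<^sup>2) \<le> C * sqrt ((real d + 1) * real n * p * ln (real n) / real L)}"
      if z: "z \<notin> (\<Union>i\<in>I. Bd i)" for z
    proof -
      obtain E Y where zEY: "z = (E, Y)" by (cases z)
      have A: "\<bar>S (wa a) z\<bar> < ta" if a: "a < n" for a
      proof -
        have "(0, a) \<in> I" "(1, a) \<in> I" using a unfolding I_def by auto
        hence "z \<notin> Bd (0, a)" "z \<notin> Bd (1, a)" using z by blast+
        hence "S (wa a) z < ta" "S (\<lambda>e. - wa a e) z < ta" unfolding Bd_def by auto
        thus ?thesis unfolding S_def noiseS_neg by linarith
      qed
      have B: "\<bar>S (wb x k) z\<bar> < tb k" if k: "k < d" for k
      proof -
        have "(2, k) \<in> I" "(3, k) \<in> I" using k unfolding I_def by auto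
        hence "z \<notin> Bd (2, k)" "z \<notin> Bd (3, k)" using z by blast+
        hence "S (wb x k) z < tb k" "S (\<lambda>e. - wb x k e) z < tb k" unfolding Bd_def by auto
        thus ?thesis unfolding S_def noiseS_neg by linarith
      qed
      have thT: "\<bar>\<theta>s a\<bar> \<le> T" if "a < n + d" for a
      proof -
        have "(\<theta>s a)\<^sup>2 \<le> (\<Sum>a<n+d. (\<theta>s a)\<^sup>2)" using that by (intro member_le_sum) auto
        hence "sqrt ((\<theta>s a)\<^sup>2) \<le> T" unfolding T_def by (rule real_sqrt_le_mono)
        thus ?thesis by simp
      qed
      have alpha: "\<bar>grad_comp (reg_loss n d x L \<tau> E Y) \<theta>s a\<bar> \<le> C * s1" if a: "a < n" for a
      proof -
        have "grad_comp (reg_loss n d x L \<tau> E Y) \<theta>s a = S (wa a) z + \<tau> * \<theta>s a"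
          unfolding S_def P_def q_def zEY by (rule grad_alpha[OF a])
        also have "\<bar>\<dots>\<bar> \<le> \<bar>S (wa a) z\<bar> + \<bar>\<tau>\<bar> * \<bar>\<theta>s a\<bar>"
          using abs_triangle_ineq[of "S (wa a) z" "\<tau> * \<theta>s a"] by (simp add: abs_mult)
        also have "\<dots> \<le> ta + \<bar>\<tau>\<bar> * T"
          using A[OF a] thT[of a] a by (intro add_mono mult_left_mono) auto
        also have "\<dots> \<le> 2 * C0 * s1 + c_tau * s1"
          using ta_le tauT ctg1 by linarith
        also have "\<dots> \<le> C * s1" unfolding C_def using C0 s1nn by (simp add: algebra_simps)
        finally show ?thesis .
      qed
      have beta: "sqrt (\<Sum>k<d. (grad_comp (reg_loss n d x L \<tau> E Y) \<theta>s (n + k))\<^sup>2) \<le> C * s2"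
      proof -
        have "sqrt (\<Sum>k<d. (grad_comp (reg_loss n d x L \<tau> E Y) \<theta>s (n + k))\<^sup>2)
            = L2_set (\<lambda>k. S (wb x k) z + \<tau> * \<theta>s (n + k)) {..<d}"
          unfolding L2_set_def S_def P_def q_def zEY by (simp add: grad_beta)
        also have "\<dots> \<le> L2_set (\<lambda>k. S (wb x k) z) {..<d} + L2_set (\<lambda>k. \<tau> * \<theta>s (n + k)) {..<d}"
          by (rule L2_set_triangle_ineq)
        also have "L2_set (\<lambda>k. S (wb x k) z) {..<d} \<le> sqrt (\<Sum>k<d. (tb k)\<^sup>2)"
          unfolding L2_set_def
          by (intro real_sqrt_le_mono sum_mono sq_le_of_abs less_imp_le B) auto
        also have "L2_set (\<lambda>k. \<tau> * \<theta>s (n + k)) {..<d} \<le> \<bar>\<tau>\<bar> * T"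
        proof -
          have "(\<Sum>k<d. (\<tau> * \<theta>s (n + k))\<^sup>2) = \<tau>\<^sup>2 * (\<Sum>k<d. (\<theta>s (n + k))\<^sup>2)"
            by (simp add: power_mult_distrib sum_distrib_left)
          also have "(\<Sum>k<d. (\<theta>s (n + k))\<^sup>2) = (\<Sum>a\<in>(\<lambda>k. n + k) ` {..<d}. (\<theta>s a)\<^sup>2)"
            by (subst sum.reindex) (auto simp: inj_on_def)
          also have "\<dots> \<le> (\<Sum>a<n+d. (\<theta>s a)\<^sup>2)" by (intro sum_mono2) auto
          finally have "(\<Sum>k<d. (\<tau> * \<theta>s (n + k))\<^sup>2) \<le> \<tau>\<^sup>2 * (\<Sum>a<n+d. (\<theta>s a)\<^sup>2)"
            by (simp add: mult_left_mono)
          hence "sqrt (\<Sum>k<d. (\<tau> * \<theta>s (n + k))\<^sup>2) \<le> sqrt (\<tau>\<^sup>2 * (\<Sum>a<n+d. (\<theta>s a)\<^sup>2))"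
            by (rule real_sqrt_le_mono)
          also have "\<dots> = \<bar>\<tau>\<bar> * T" unfolding T_def by (simp add: real_sqrt_mult)
          finally show ?thesis unfolding L2_set_def .
        qed
        also have "sqrt (\<Sum>k<d. (tb k)\<^sup>2) + \<bar>\<tau>\<bar> * T \<le> 3 * C0 * s2 + c_tau * s2"
          using sumtb tauT ctg2 by linarith
        also have "\<dots> = C * s2" unfolding C_def by (simp add: algebra_simps)
        finally show ?thesis by simp
      qed
      show ?thesis using alpha beta unfolding zEY \<tau>_def s1_def s2_def by (simp add: Let_def)
    qed
    have A1: "measure_pmf.prob M (UNIV - (\<Union>i\<in>I. Bd i)) \<le> measure_pmf.prob M {(E, Y). let g = grad_comp (reg_loss n d x L (tau_val c_tau n d x \<theta>s L) E Y) \<theta>s in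
           (\<forall>i<n. \<bar>g i\<bar> \<le> C * sqrt (real n * p * ln (real n) / real L)) \<and>
           sqrt (\<Sum>k<d. (g (n + k))\<^sup>2) \<le> C * sqrt ((real d + 1) * real n * p * ln (real n) / real L)}"
      by (intro measure_pmf.finite_measure_mono) (use good in auto)
    have A2: "measure_pmf.prob M (UNIV - (\<Union>i\<in>I. Bd i)) = 1 - measure_pmf.prob M (\<Union>i\<in>I. Bd i)"
      using measure_pmf.prob_compl[of "\<Union>i\<in>I. Bd i" M] by simp
    have sM: "sample_pmf n d x \<theta>s p L = M" unfolding M_def P_def q_def by (rule sample_eq)
    show "1 - 4 / real n ^ 10 \<le> measure_pmf.prob (sample_pmf n d x \<theta>s p L) {(E, Y). let g = grad_comp (reg_loss n d x L (tau_val c_tau n d x \<theta>s L) E Y) \<theta>s in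
           (\<forall>i<n. \<bar>g i\<bar> \<le> C * sqrt (real n * p * ln (real n) / real L)) \<and>
           sqrt (\<Sum>k<d. (g (n + k))\<^sup>2) \<le> C * sqrt ((real d + 1) * real n * p * ln (real n) / real L)}"
      unfolding sM using A1 A2 probBad by linarith
  qed
qed


end
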